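(* For every integer $l\ge 7$ there is no monotone search $\tilde c$-strategy (for any color assignment $\tilde c$) that cleans the tree $T_l$ using $3$ searchers.
   Context: An edge-labeled graph $G=(V(G),E(G),c)$ is a simple graph with $c\colon E(G)\to\{1,\dots,k\}$; $c(v)$ denotes the set of colors of edges incident to $v$. Edge search: a search strategy is a sequence of moves: placing a searcher on a vertex, removing a searcher from a vertex, or sliding a searcher from $u$ along an edge $\{u,v\}$ to $v$. Initially all edges are contaminated; a slide along an edge makes it clean; after every move, a clean edge $e$ becomes contaminated (recontamination) if some path with no searcher-occupied vertex joins an endpoint of $e$ to an endpoint of a contaminated edge. The strategy must end with all edges clean; it uses $k$ searchers if at most $k$ are simultaneously present. It is monotone if no recontamination occurs. In a search $\tilde c$-strategy each searcher $j$ has a fixed color $\tilde c(j)$, may be placed on $v$ only if $\tilde c(j)\in c(v)$, and may slide along $e$ only if $\tilde c(j)=c(e)$. The tree $T_l$ ($l\ge 3$), with colors $\{1,2,3\}$: For $i\in\{1,2\}$, $T'_i$ has root $q_i$ with three children joined to $q_i$ by edges of color 1, and each of these children has three children joined by edges of color 2. $T''_l$: a path $v_0,v_1,\dots,v_{l+1}$ with edges $e_x=\{v_x,v_{x+1}\}$ of color $(x \bmod 3)+1$ for $x\in\{0,\dots,l\}$; additionally, for each $x\in\{1,\dots,l\}$, attach to $v_x$ one pendant edge of color $(x\bmod 3)+1$ and one pendant edge of color $((x-1)\bmod 3)+1$. Let $P$ be a path $p_0p_1p_2p_3p_4$ with edges $\{p_0,p_1\},\{p_3,p_4\}$ of color 3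 and $\{p_1,p_2\},\{p_2,p_3\}$ of color 2. $T_l$ is obtained from disjoint copies of $T'_1,T'_2,T''_l,P$ by identifying $p_2$ with $v_0$, $p_0$ with $q_1$, and $p_4$ with $q_2$. *)

theory Defs
  imports Main
begin

text \<open>An edge-labelled graph is given by a set E of 2-element vertex sets and a
colouring c of its edges. Searchers are indexed 0,...,k-1; searcher j has colour ct j.
A configuration is a pair (positions of searchers, set of clean edges).\<close>

datatype 'v move = Place nat 'v | Remove nat | Slide nat 'v 'v

definition vcolors :: "'v set set \<Rightarrow> ('v set \<Rightarrow> nat) \<Rightarrow> 'v \<Rightarrow> nat set" where
  "vcolors E c v = {c e | e. e \<in> E \<and> v \<in> e}"

definition occupied :: "(nat \<Rightarrow> 'v option) \<Rightarrow> 'v set" where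
  "occupied pos = {v. \<exists>j. pos j = Some v}"

definition free_conn :: "'v set set \<Rightarrow> 'v set \<Rightarrow> 'v \<Rightarrow> 'v \<Rightarrow> bool" where
  "free_conn E Occ x y \<longleftrightarrow> x \<notin> Occ \<and> (\<lambda>a b. {a, b} \<in> E \<and> a \<notin> Occ \<and> b \<notin> Occ)\<^sup>*\<^sup>* x y"

definition recontaminate :: "'v set set \<Rightarrow> 'v set \<Rightarrow> 'v set set \<Rightarrow> 'v set set" where
  "recontaminate E Occ C =
     {e \<in> C. \<not> (\<exists>x\<in>e. \<exists>f\<in>E - C. \<exists>y\<in>f. free_conn E Occ x y)}"

fun legal :: "'v set set \<Rightarrow> ('v set \<Rightarrow> nat) \<Rightarrow> (nat \<Rightarrow> nat) \<Rightarrow> nat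
              \<Rightarrow> (nat \<Rightarrow> 'v option) \<Rightarrow> 'v move \<Rightarrow> bool" where
  "legal E c ct k pos (Place j v) \<longleftrightarrow> j < k \<and> pos j = None \<and> ct j \<in> vcolors E c v"
| "legal E c ct k pos (Remove j) \<longleftrightarrow> j < k \<and> pos j \<noteq> None"
| "legal E c ct k pos (Slide j u v) \<longleftrightarrow>
     j < k \<and> pos j = Some u \<and> {u, v} \<in> E \<and> c {u, v} = ct j"

fun new_pos :: "(nat \<Rightarrow> 'v option) \<Rightarrow> 'v move \<Rightarrow> (nat \<Rightarrow> 'v option)" where
  "new_pos pos (Place j v) = pos(j := Some v)"
| "new_pos pos (Remove j) = pos(j := None)"
| "new_pos pos (Slide j u v) = pos(j := Some v)"

fun slid :: "'v set set \<Rightarrow> 'v move \<Rightarrow> 'v set set" where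
  "slid C (Slide j u v) = C \<union> {{u, v}}"
| "slid C _ = C"

definition search_strategy ::
  "'v set set \<Rightarrow> ('v set \<Rightarrow> nat) \<Rightarrow> (nat \<Rightarrow> nat) \<Rightarrow> nat \<Rightarrow> nat
   \<Rightarrow> (nat \<Rightarrow> 'v move) \<Rightarrow> (nat \<Rightarrow> (nat \<Rightarrow> 'v option) \<times> 'v set set) \<Rightarrow> bool" where
  "search_strategy E c ct k n ms ss \<longleftrightarrow>
     ss 0 = (\<lambda>_. None, {}) \<and>
     (\<forall>i<n. legal E c ct k (fst (ss i)) (ms i) \<and>
            ss (Suc i) = (new_pos (fst (ss i)) (ms i),
                          recontaminate E (occupied (new_pos (fst (ss i)) (ms i)))
                                        (slid (snd (ss i)) (ms i)))) \<and>
     snd (ss n) = E"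

definition monotone_search_strategy ::
  "'v set set \<Rightarrow> ('v set \<Rightarrow> nat) \<Rightarrow> (nat \<Rightarrow> nat) \<Rightarrow> nat \<Rightarrow> nat
   \<Rightarrow> (nat \<Rightarrow> 'v move) \<Rightarrow> (nat \<Rightarrow> (nat \<Rightarrow> 'v option) \<times> 'v set set) \<Rightarrow> bool" where
  "monotone_search_strategy E c ct k n ms ss \<longleftrightarrow>
     search_strategy E c ct k n ms ss \<and>
     (\<forall>i<n. recontaminate E (occupied (new_pos (fst (ss i)) (ms i))) (slid (snd (ss i)) (ms i))
             = slid (snd (ss i)) (ms i))"

text \<open>Vertices: Q i = q_i (= p_0 for i=1, = p_4 for i=2); Ch i a children of q_i;
Gr i a b grandchildren; V x = v_x (V 0 = p_2); PA x, PB x pendant vertices at v_x;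
P1 = p_1, P3 = p_3.\<close>
datatype vert = Q nat | Ch nat nat | Gr nat nat nat | V nat | PA nat | PB nat | P1 | P3

definition T_tri :: "nat \<Rightarrow> (vert \<times> vert \<times> nat) set" where
  "T_tri l =
     {(Q i, Ch i a, 1) | i a. i \<in> {1, 2} \<and> a < 3} \<union>
     {(Ch i a, Gr i a b, 2) | i a b. i \<in> {1, 2} \<and> a < 3 \<and> b < 3} \<union>
     {(V x, V (Suc x), x mod 3 + 1) | x. x \<le> l} \<union>
     {(V x, PA x, x mod 3 + 1) | x. 1 \<le> x \<and> x \<le> l} \<union>
     {(V x, PB x, (x - 1) mod 3 + 1) | x. 1 \<le> x \<and> x \<le> l} \<union>
     {(Q 1, P1, 3), (P1, V 0, 2), (V 0, P3, 2), (P3, Q 2, 3)}"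

definition T_edges :: "nat \<Rightarrow> vert set set" where
  "T_edges l = {{u, v} | u v c. (u, v, c) \<in> T_tri l}"

definition T_col :: "nat \<Rightarrow> vert set \<Rightarrow> nat" where
  "T_col l e = (THE c. \<exists>u v. (u, v, c) \<in> T_tri l \<and> e = {u, v})"

end

theory Submission
  imports Defs
begin


lemma T_edges_iff: "e \<in> T_edges l \<longleftrightarrow> (\<exists>u v c. (u,v,c) \<in> T_tri l \<and> e = {u,v})"
  by (auto simp: T_edges_def)

lemma tri_uniq: "(u,v,c) \<in> T_tri l \<Longrightarrow> (u',v',c') \<in> T_tri l \<Longrightarrow> {u,v} = {u',v'} \<Longrightarrow> c = c'"
  unfolding T_tri_def doubleton_eq_iff by auto

lemma tri_neq: "(u,v,c) \<in> T_tri l \<Longrightarrow> u \<noteq> v"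
  unfolding T_tri_def by auto

lemma tri_col: "(u,v,c) \<in> T_tri l \<Longrightarrow> T_col l {u,v} = c"
  unfolding T_col_def
  by (rule the_equality) (auto dest: tri_uniq)

lemma tri_edge: "(u,v,c) \<in> T_tri l \<Longrightarrow> {u,v} \<in> T_edges l"
  by (auto simp: T_edges_def)

lemma edge_neq: "{a,b} \<in> T_edges l \<Longrightarrow> a \<noteq> b"
  unfolding T_edges_iff doubleton_eq_iff by (auto dest: tri_neq)

lemma vcol_tri: "c \<in> vcolors (T_edges l) (T_col l) w \<Longrightarrow> \<exists>u v. (u,v,c) \<in> T_tri l \<and> (w = u \<or> w = v)"
  unfolding vcolors_def T_edges_iff by (auto dest: tri_col)

lemma tri_QCh: "i \<in> {1,2} \<Longrightarrow> a < 3 \<Longrightarrow> (Q i, Ch i a, 1) \<in> T_tri l"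
  unfolding T_tri_def by blast
lemma tri_ChGr: "i \<in> {1,2} \<Longrightarrow> a < 3 \<Longrightarrow> b < 3 \<Longrightarrow> (Ch i a, Gr i a b, 2) \<in> T_tri l"
  unfolding T_tri_def by blast
lemma tri_VV: "x \<le> l \<Longrightarrow> (V x, V (Suc x), x mod 3 + 1) \<in> T_tri l"
  unfolding T_tri_def by blast
lemma tri_VPA: "1 \<le> x \<Longrightarrow> x \<le> l \<Longrightarrow> (V x, PA x, x mod 3 + 1) \<in> T_tri l"
  unfolding T_tri_def by blast

definition pp :: "nat \<Rightarrow> vert" where "pp i = (if i = 1 then P1 else P3)"

lemma edge_Qpp: "i \<in> {1,2} \<Longrightarrow> {Q i, pp i} \<in> T_edges l"
  unfolding pp_def T_edges_iff T_tri_def by auto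
lemma edge_Vpp: "i \<in> {1,2} \<Longrightarrow> {V 0, pp i} \<in> T_edges l"
  unfolding pp_def T_edges_iff T_tri_def doubleton_eq_iff by auto

lemma vc_Ch: "c \<in> vcolors (T_edges l) (T_col l) (Ch i a) \<Longrightarrow> c \<in> {1,2}"
  by (drule vcol_tri) (auto simp: T_tri_def)
lemma vc_V0: "c \<in> vcolors (T_edges l) (T_col l) (V 0) \<Longrightarrow> c \<in> {1,2}"
  by (drule vcol_tri) (auto simp: T_tri_def)
lemma vc_Q: "c \<in> vcolors (T_edges l) (T_col l) (Q i) \<Longrightarrow> c \<in> {1,3}"
  by (drule vcol_tri) (auto simp: T_tri_def)
lemma vc_pp: "c \<in> vcolors (T_edges l) (T_col l) (pp i) \<Longrightarrow> c \<in> {2,3}"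
  by (drule vcol_tri) (auto simp: T_tri_def pp_def split: if_splits)
lemma vc_V4: "c \<in> vcolors (T_edges l) (T_col l) (V 4) \<Longrightarrow> c \<in> {1,2}"
  by (drule vcol_tri) (auto simp: T_tri_def)
lemma vc_V5: "c \<in> vcolors (T_edges l) (T_col l) (V 5) \<Longrightarrow> c \<in> {2,3}"
  by (drule vcol_tri) (auto simp: T_tri_def)
lemma vc_V6: "c \<in> vcolors (T_edges l) (T_col l) (V 6) \<Longrightarrow> c \<in> {1,3}"
  by (drule vcol_tri) (auto simp: T_tri_def)
lemma vc_V7: "c \<in> vcolors (T_edges l) (T_col l) (V 7) \<Longrightarrow> c \<in> {1,2}"
  by (drule vcol_tri) (auto simp: T_tri_def)




locale strat =
  fixes l :: nat and ct :: "nat \<Rightarrow> nat" and n :: nat and ms :: "nat \<Rightarrow> vert move"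
    and ss :: "nat \<Rightarrow> (nat \<Rightarrow> vert option) \<times> vert set set"
  assumes ms: "monotone_search_strategy (T_edges l) (T_col l) ct 3 n ms ss"
begin

abbreviation "E \<equiv> T_edges l"
definition C where "C t = snd (ss t)"
definition P where "P t = fst (ss t)"
definition mixed where "mixed t v \<longleftrightarrow> (\<exists>e\<in>C t. v \<in> e) \<and> (\<exists>f\<in>E. f \<notin> C t \<and> v \<in> f)"

lemma step: "i < n \<Longrightarrow> legal E (T_col l) ct 3 (P i) (ms i) \<and> P (Suc i) = new_pos (P i) (ms i)
   \<and> C (Suc i) = slid (C i) (ms i) \<and> recontaminate E (occupied (P (Suc i))) (C (Suc i)) = C (Suc i)"
  using ms unfolding monotone_search_strategy_def search_strategy_def C_def P_def
  by (metis fst_conv snd_conv)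

lemma C0: "C 0 = {}" and P0: "P 0 = (\<lambda>_. None)" and Cn: "C n = E"
  using ms unfolding monotone_search_strategy_def search_strategy_def C_def P_def by auto

lemma C_sub: "t \<le> n \<Longrightarrow> C t \<subseteq> E"
proof (induction t)
  case 0 then show ?case by (simp add: C0)
next
  case (Suc t)
  then have "t < n" by simp
  from step[OF this] Suc show ?case
    by (cases "ms t") auto
qed

lemma C_step_mono: "i < n \<Longrightarrow> C i \<subseteq> C (Suc i)"
  using step by (cases "ms i") auto

lemma C_mono: "s \<le> t \<Longrightarrow> t \<le> n \<Longrightarrow> C s \<subseteq> C t"
proof (induction t)
  case 0 then show ?case by simp
next
  case (Suc t)
  show ?case
  proof (cases "s = Suc t")
    case False
    then have "s \<le> t" using Suc by simp
    then show ?thesis using Suc C_step_mono[of t] by auto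
  qed simp
qed

lemma P_frame: "i < n \<Longrightarrow> \<exists>j. \<forall>k. k \<noteq> j \<longrightarrow> P (Suc i) k = P i k"
  using step[of i] by (cases "ms i") auto

lemma clean_step:
  assumes "i < n" "e \<in> C (Suc i)" "e \<notin> C i"
  shows "\<exists>j a b. ms i = Slide j a b \<and> e = {a,b} \<and> j < 3 \<and> P i j = Some a \<and> P (Suc i) j = Some b
          \<and> {a,b} \<in> E \<and> T_col l {a,b} = ct j \<and> (\<forall>k. k \<noteq> j \<longrightarrow> P (Suc i) k = P i k)"
  using step[OF assms(1)] assms(2,3) by (cases "ms i") auto

lemma P_lt: "t \<le> n \<Longrightarrow> P t j \<noteq> None \<Longrightarrow> j < 3"
proof (induction t)
  case 0 then show ?case by (simp add: P0)
next
  case (Suc t)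
  then have "t < n" by simp
  from step[OF this] Suc show ?case
    by (cases "ms t") (auto split: if_splits)
qed

lemma P_col: "t \<le> n \<Longrightarrow> P t j = Some v \<Longrightarrow> ct j \<in> vcolors E (T_col l) v"
proof (induction t arbitrary: v)
  case 0 then show ?case by (simp add: P0)
next
  case (Suc t)
  then have "t < n" by simp
  note st = step[OF this]
  show ?case
  proof (cases "ms t")
    case (Slide j' a b)
    show ?thesis
    proof (cases "j = j'")
      case True
      then have "v = b" "ct j = T_col l {a,b}" "{a,b} \<in> E" using st Slide Suc.prems by auto
      then show ?thesis unfolding vcolors_def by blast
    next
      case False
      then have "P t j = Some v" using st Slide Suc.prems by auto
      then show ?thesis using Suc by simp
    qed
  qed (use st Suc in \<open>auto split: if_splits\<close>)
qed

lemma nomix: "t \<le> n \<Longrightarrow> (\<forall>j. P t j \<noteq> Some v) \<Longrightarrow> \<not> mixed t v"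
proof (cases t)
  case 0 then show "\<not> mixed t v" by (simp add: mixed_def C0)
next
  case (Suc i)
  assume tn: "t \<le> n" and nv: "\<forall>j. P t j \<noteq> Some v"
  then have i: "i < n" using Suc by simp
  from step[OF i] have "recontaminate E (occupied (P (Suc i))) (C (Suc i)) = C (Suc i)" by blast
  then have rc: "recontaminate E (occupied (P t)) (C t) = C t" unfolding Suc .
  show "\<not> mixed t v"
  proof
    assume "mixed t v"
    then obtain e f where e: "e \<in> C t" "v \<in> e" and f: "f \<in> E" "f \<notin> C t" "v \<in> f"
      unfolding mixed_def by blast
    have vo: "v \<notin> occupied (P t)" using nv by (simp add: occupied_def)
    have "free_conn E (occupied (P t)) v v" using vo by (simp add: free_conn_def)
    then have "e \<notin> recontaminate E (occupied (P t)) (C t)"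
      unfolding recontaminate_def using e f by blast
    then show False using rc e by simp
  qed
qed

definition cl where "cl e s \<longleftrightarrow> s < n \<and> e \<notin> C s \<and> e \<in> C (Suc s)"

lemma ex_step: "\<not> R (0::nat) \<Longrightarrow> R m \<Longrightarrow> \<exists>s<m. \<not> R s \<and> R (Suc s)"
proof (induction m)
  case (Suc m) then show ?case by (cases "R m") (auto intro: less_SucI)
qed simp

lemma cl_ex: "e \<in> E \<Longrightarrow> \<exists>s. cl e s"
  using ex_step[of "\<lambda>t. e \<in> C t" n] C0 Cn unfolding cl_def by auto

lemma cl_uniq: "cl e s \<Longrightarrow> cl f s \<Longrightarrow> e = f"
  unfolding cl_def using step by (cases "ms s") auto

definition meet where "meet t v \<longleftrightarrow> t \<le> n \<and> mixed t v \<and> (\<exists>j k. j \<noteq> k \<and> P t j = Some v \<and> P t k = Some v)"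

lemma occ: "t \<le> n \<Longrightarrow> mixed t v \<Longrightarrow> \<exists>j. P t j = Some v"
  using nomix by blast

lemma meet_core:
  assumes c1: "cl e1 s1" and c2: "cl e2 s2" and c3: "cl e3 s3" and o: "s1 < s2" "s2 < s3"
    and v: "v \<in> e1" "v \<in> e2" "v \<in> e3" and E: "e1 \<in> E" "e3 \<in> E"
  shows "\<exists>t. meet t v"
proof -
  have s3: "s3 < n" and s2: "s2 < n" using c3 o unfolding cl_def by auto
  have "e1 \<in> C s2" using c1 C_mono[of "Suc s1" s2] o s2 unfolding cl_def by auto
  then have e1': "e1 \<in> C (Suc s2)" using C_step_mono[OF s2] by auto
  have "e3 \<notin> C (Suc s2)" using c3 C_mono[of "Suc s2" s3] o s3 unfolding cl_def by auto
  then have e3: "e3 \<notin> C s2" using C_step_mono[OF s2] by auto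
  have m1: "mixed s2 v" unfolding mixed_def using \<open>e1 \<in> C s2\<close> e3 v E by blast
  have m2: "mixed (Suc s2) v" unfolding mixed_def using e1' \<open>e3 \<notin> C (Suc s2)\<close> v E by blast
  obtain j a b where sl: "e2 = {a,b}" "P s2 j = Some a" "P (Suc s2) j = Some b" "{a,b} \<in> E"
     "\<forall>k. k \<noteq> j \<longrightarrow> P (Suc s2) k = P s2 k"
    using clean_step[of s2 e2] c2 unfolding cl_def by blast
  have ab: "a \<noteq> b" using edge_neq sl(4) by blast
  show ?thesis
  proof (cases "v = b")
    case True
    obtain k where k: "P s2 k = Some v" using occ[OF _ m1] s2 by auto
    have "k \<noteq> j" using k sl(2) ab True by auto
    then have "P (Suc s2) k = Some v" using sl(5) k by auto
    moreover have "Suc s2 \<le> n" using s2 by simp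
    ultimately show ?thesis unfolding meet_def using m2 sl(3) True \<open>k \<noteq> j\<close> by blast
  next
    case False
    then have va: "v = a" using v sl(1) by auto
    obtain k where k: "P (Suc s2) k = Some v" using occ[OF _ m2] s2 by auto
    have "k \<noteq> j" using k sl(3) False by auto
    then have "P s2 k = Some v" using sl(5) k by auto
    moreover have "s2 \<le> n" using s2 by simp
    ultimately show ?thesis unfolding meet_def using m1 sl(2) va \<open>k \<noteq> j\<close> by blast
  qed
qed

lemma meet3:
  assumes E: "e1 \<in> E" "e2 \<in> E" "e3 \<in> E" and d: "e1 \<noteq> e2" "e1 \<noteq> e3" "e2 \<noteq> e3"
    and v: "v \<in> e1" "v \<in> e2" "v \<in> e3"
  shows "\<exists>t. meet t v"
proof -
  obtain s1 s2 s3 where c: "cl e1 s1" "cl e2 s2" "cl e3 s3" using cl_ex E by metis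
  have "s1 \<noteq> s2" "s1 \<noteq> s3" "s2 \<noteq> s3" using c d cl_uniq by metis+
  then consider "s1 < s2 \<and> s2 < s3" | "s1 < s3 \<and> s3 < s2" | "s2 < s1 \<and> s1 < s3"
    | "s2 < s3 \<and> s3 < s1" | "s3 < s1 \<and> s1 < s2" | "s3 < s2 \<and> s2 < s1" by arith
  then show ?thesis
    by cases (meson meet_core c v E)+
qed

lemma colors_ex: "c \<in> {1,2,3} \<Longrightarrow> \<exists>j<3. ct j = c"
proof -
  assume c: "c \<in> {1,2,3}"
  obtain u v where t: "(u,v,c) \<in> T_tri l"
  proof -
    have "(Q 1, Ch 1 0, 1) \<in> T_tri l" by (rule tri_QCh) auto
    moreover have "(P1, V 0, 2) \<in> T_tri l" unfolding T_tri_def by blast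
    moreover have "(Q 1, P1, 3) \<in> T_tri l" unfolding T_tri_def by blast
    ultimately show ?thesis using c that by blast
  qed
  then have e: "{u,v} \<in> E" by (rule tri_edge)
  obtain s where "cl {u,v} s" using cl_ex[OF e] by blast
  then obtain j a b where "{u,v} = {a,b}" "j < 3" "T_col l {a,b} = ct j"
    using clean_step[of s "{u,v}"] unfolding cl_def by blast
  then show ?thesis using tri_col[OF t] by metis
qed

lemma ct_facts: "(\<forall>j<3. ct j \<in> {1,2,3}) \<and> (\<forall>j k. j < 3 \<longrightarrow> k < 3 \<longrightarrow> ct j = ct k \<longrightarrow> j = k)"
proof -
  obtain j1 j2 j3 where J: "j1 < 3" "ct j1 = 1" "j2 < 3" "ct j2 = 2" "j3 < 3" "ct j3 = 3"
    using colors_ex by (metis insertCI)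
  moreover have all: "\<forall>j<3. j = j1 \<or> j = j2 \<or> j = j3"
    using J by (metis less_Suc_eq numeral_3_eq_3 numeral_2_eq_2 One_nat_def zero_neq_numeral
      n_not_Suc_n less_one)
  ultimately show ?thesis
  proof (intro conjI allI impI)
    fix j k assume a: "j < 3" "k < 3" "ct j = ct k"
    have "j = j1 \<or> j = j2 \<or> j = j3" "k = j1 \<or> k = j2 \<or> k = j3"
      using a all by auto
    then show "j = k" using a(3) J by auto
  qed (use J all in auto)
qed

end



context strat begin

lemma nm_eq: "\<not> mixed t w \<Longrightarrow> e \<in> E \<Longrightarrow> f \<in> E \<Longrightarrow> w \<in> e \<Longrightarrow> w \<in> f \<Longrightarrow> (e \<in> C t \<longleftrightarrow> f \<in> C t)"
  unfolding mixed_def by blast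

lemma unocc: "t \<le> n \<Longrightarrow> (\<forall>k<3. P t k \<noteq> Some w) \<Longrightarrow> \<not> mixed t w"
  using nomix P_lt by (metis option.distinct(1) not_less)

lemma meet_third:
  assumes m: "meet t v" and vc: "\<And>c'. c' \<in> vcolors E (T_col l) v \<Longrightarrow> c' \<in> {a,b}"
    and abc: "a \<noteq> b" "c \<noteq> a" "c \<noteq> b" "a \<in> {1,2,3}" "b \<in> {1,2,3}" "c \<in> {1,2,3}"
  shows "\<exists>j3<3. ct j3 = c \<and> (\<forall>w. w \<noteq> v \<longrightarrow> P t j3 \<noteq> Some w \<longrightarrow> \<not> mixed t w)"
proof -
  obtain j1 j2 where j: "j1 \<noteq> j2" "P t j1 = Some v" "P t j2 = Some v" and tn: "t \<le> n"
    using m unfolding meet_def by blast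
  have jl: "j1 < 3" "j2 < 3" using P_lt tn j by auto
  have c12: "ct j1 \<in> {a,b}" "ct j2 \<in> {a,b}" using vc P_col tn j by auto
  define j3 where "j3 = 3 - j1 - j2"
  have j3: "j3 < 3" "j3 \<noteq> j1" "j3 \<noteq> j2"
    using jl j(1) unfolding j3_def by arith+
  have "\<forall>k<3. k = j1 \<or> k = j2 \<or> k = j3"
  proof (intro allI impI)
    fix k :: nat assume "k < 3" then show "k = j1 \<or> k = j2 \<or> k = j3"
      using jl j(1) unfolding j3_def by arith
  qed
  note j3 = j3 this
  have "ct j3 \<noteq> ct j1" "ct j3 \<noteq> ct j2" "ct j1 \<noteq> ct j2" using ct_facts j3 jl j(1) by metis+
  moreover have "ct j3 \<in> {1,2,3}" using ct_facts j3 by auto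
  ultimately have "ct j3 = c" using c12 abc by auto
  moreover have "\<forall>w. w \<noteq> v \<longrightarrow> P t j3 \<noteq> Some w \<longrightarrow> \<not> mixed t w"
  proof (intro allI impI)
    fix w assume "w \<noteq> v" "P t j3 \<noteq> Some w"
    then have "\<forall>k<3. P t k \<noteq> Some w" using j3(4) j by auto
    then show "\<not> mixed t w" using unocc tn by blast
  qed
  ultimately show ?thesis using j3 by blast
qed

lemma meet_two: "meet t v \<Longrightarrow> meet t w \<Longrightarrow> v = w"
proof (rule ccontr)
  assume "meet t v" "meet t w" "v \<noteq> w"
  then obtain j1 j2 k1 k2 where "j1 \<noteq> j2" "P t j1 = Some v" "P t j2 = Some v"
    "k1 \<noteq> k2" "P t k1 = Some w" "P t k2 = Some w" and tn: "t \<le> n"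
    unfolding meet_def by blast
  moreover have "j1 < 3" "j2 < 3" "k1 < 3" "k2 < 3" using calculation P_lt by auto
  moreover have "j1 \<noteq> k1" "j1 \<noteq> k2" "j2 \<noteq> k1" "j2 \<noteq> k2" using calculation \<open>v \<noteq> w\<close> by auto
  ultimately show False by arith
qed

lemma ch_meet: "i \<in> {1,2} \<Longrightarrow> a < 3 \<Longrightarrow> \<exists>t. meet t (Ch i a)"
  apply (rule meet3[of "{Q i, Ch i a}" "{Ch i a, Gr i a 0}" "{Ch i a, Gr i a 1}"])
  by (auto intro!: tri_edge tri_QCh tri_ChGr simp: doubleton_eq_iff)

lemma ch_middle:
  assumes i: "i \<in> {1,2}" and abc: "a < 3" "b < 3" "c < 3" "a \<noteq> b" "a \<noteq> c" "b \<noteq> c"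
    and mb: "meet tb (Ch i b)" and ma: "meet ta (Ch i a)" and mc: "meet tc (Ch i c)"
    and o: "tb < ta" "ta < tc"
  shows "\<forall>w. w \<noteq> Ch i a \<longrightarrow> w \<noteq> Q i \<longrightarrow> \<not> mixed ta w"
proof -
  obtain j3 where j3: "j3 < 3" "ct j3 = 3" "\<forall>w. w \<noteq> Ch i a \<longrightarrow> P ta j3 \<noteq> Some w \<longrightarrow> \<not> mixed ta w"
  proof -
    have vcCh: "\<And>c'. c' \<in> vcolors E (T_col l) (Ch i a) \<Longrightarrow> c' \<in> {1,2}" by (rule vc_Ch)
    show ?thesis using meet_third[OF ma vcCh, where c=3] that by auto
  qed
  have tan: "ta \<le> n" and tcn: "tc \<le> n" using ma mc unfolding meet_def by auto
  show ?thesis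
  proof (cases "P ta j3 = Some (Q i)")
    case True
    then show ?thesis using j3 by auto
  next
    case False
    have nQ: "\<not> mixed ta (Q i)" using False j3 by auto
    have nCh: "\<not> mixed ta (Ch i d)" if "d \<noteq> a" for d
    proof -
      have "ct j3 \<notin> vcolors E (T_col l) (Ch i d)" using vc_Ch[of 3 l i d] j3(2) by auto
      then have "P ta j3 \<noteq> Some (Ch i d)"
        using P_col[OF tan, of j3 "Ch i d"] by blast
      then show ?thesis using j3(3) that by auto
    qed
    have eb: "{Q i, Ch i b} \<in> E" "{Q i, Ch i c} \<in> E"
      using tri_edge[OF tri_QCh[OF i abc(2)]] tri_edge[OF tri_QCh[OF i abc(3)]] by auto
    have nb: "\<not> mixed ta (Ch i b)" and nc: "\<not> mixed ta (Ch i c)" using nCh abc by auto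
    obtain e where e: "e \<in> C tb" "Ch i b \<in> e" using mb unfolding meet_def mixed_def by blast
    have "e \<in> E" using e(1) C_sub[of tb] o tan by auto
    have "e \<in> C ta" using e C_mono[of tb ta] o tan by auto
    then have "{Q i, Ch i b} \<in> C ta" using nm_eq[OF nb \<open>e \<in> E\<close> eb(1) e(2)] by blast
    then have c2: "{Q i, Ch i c} \<in> C ta" using nm_eq[OF nQ eb(1) eb(2)] by blast
    have "\<forall>f\<in>E. Ch i c \<in> f \<longrightarrow> f \<in> C ta"
    proof (intro ballI impI)
      fix f assume "f \<in> E" "Ch i c \<in> f"
      then show "f \<in> C ta" using nm_eq[OF nc \<open>f \<in> E\<close> eb(2)] c2 by blast
    qed
    then have "\<forall>f\<in>E. Ch i c \<in> f \<longrightarrow> f \<in> C tc" using C_mono[of ta tc] o tcn by auto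
    then have "\<not> mixed tc (Ch i c)" unfolding mixed_def by auto
    then show ?thesis using mc unfolding meet_def by auto
  qed
qed

lemma side_help: "meet t (Ch i a) \<Longrightarrow> a < 3 \<Longrightarrow> (\<forall>w. w \<noteq> Ch i a \<longrightarrow> w \<noteq> Q i \<longrightarrow> \<not> mixed t w) \<Longrightarrow>
  \<exists>a<3. \<exists>t\<le>n. mixed t (Ch i a) \<and> (\<forall>w. w \<noteq> Ch i a \<longrightarrow> w \<noteq> Q i \<longrightarrow> \<not> mixed t w)"
  unfolding meet_def by blast

lemma side:
  assumes i: "i \<in> {1,2}"
  shows "\<exists>a<3. \<exists>t\<le>n. mixed t (Ch i a) \<and> (\<forall>w. w \<noteq> Ch i a \<longrightarrow> w \<noteq> Q i \<longrightarrow> \<not> mixed t w)"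
proof -
  obtain t0 t1 t2 where m: "meet t0 (Ch i 0)" "meet t1 (Ch i 1)" "meet t2 (Ch i 2)"
    using ch_meet[OF i, of 0] ch_meet[OF i, of 1] ch_meet[OF i, of 2] by auto
  have d: "t0 \<noteq> t1" "t0 \<noteq> t2" "t1 \<noteq> t2"
    using m meet_two[of t0 "Ch i 0" "Ch i 1"] meet_two[of t0 "Ch i 0" "Ch i 2"]
      meet_two[of t1 "Ch i 1" "Ch i 2"] by auto
  consider "t0 < t1 \<and> t1 < t2" | "t0 < t2 \<and> t2 < t1" | "t1 < t0 \<and> t0 < t2"
    | "t1 < t2 \<and> t2 < t0" | "t2 < t0 \<and> t0 < t1" | "t2 < t1 \<and> t1 < t0" using d by arith
  then show ?thesis
  proof cases
    case 1 then show ?thesis using ch_middle[OF i, of 1 0 2 t0 t1 t2] m side_help[OF m(2)] by simp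
  next
    case 2 then show ?thesis using ch_middle[OF i, of 2 0 1 t0 t2 t1] m side_help[OF m(3)] by simp
  next
    case 3 then show ?thesis using ch_middle[OF i, of 0 1 2 t1 t0 t2] m side_help[OF m(1)] by simp
  next
    case 4 then show ?thesis using ch_middle[OF i, of 2 1 0 t1 t2 t0] m side_help[OF m(3)] by simp
  next
    case 5 then show ?thesis using ch_middle[OF i, of 0 2 1 t2 t0 t1] m side_help[OF m(1)] by simp
  next
    case 6 then show ?thesis using ch_middle[OF i, of 1 2 0 t2 t1 t0] m side_help[OF m(2)] by simp
  qed
qed

end



lemma pp_simps[simp]: "pp i \<noteq> V x" "V x \<noteq> pp i" "pp i \<noteq> Q k" "Q k \<noteq> pp i"
  "pp i \<noteq> Ch k a" "Ch k a \<noteq> pp i"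
  by (auto simp: pp_def)

lemma pp_inj: "i \<in> {1,2} \<Longrightarrow> j \<in> {1,2} \<Longrightarrow> i \<noteq> j \<Longrightarrow> pp i \<noteq> pp j"
  by (auto simp: pp_def)

definition ee :: "nat \<Rightarrow> vert set" where "ee x = {V x, V (Suc x)}"

context strat begin

lemma nmC: "\<not> mixed t w \<Longrightarrow> e \<in> C t \<Longrightarrow> f \<in> E \<Longrightarrow> w \<in> e \<Longrightarrow> w \<in> f \<Longrightarrow> f \<in> C t"
  unfolding mixed_def by blast
lemma nmN: "\<not> mixed t w \<Longrightarrow> e \<in> E \<Longrightarrow> e \<notin> C t \<Longrightarrow> w \<in> e \<Longrightarrow> w \<in> f \<Longrightarrow> f \<notin> C t"
  unfolding mixed_def by blast

lemma ee_E: "x \<le> l \<Longrightarrow> ee x \<in> E"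
  unfolding ee_def by (rule tri_edge[OF tri_VV])

lemma eQ_E: "i \<in> {1,2} \<Longrightarrow> a < 3 \<Longrightarrow> {Q i, Ch i a} \<in> E"
  by (rule tri_edge[OF tri_QCh])

lemma chain:
  "(\<forall>w. y < w \<and> w \<le> z \<longrightarrow> \<not> mixed t (V w)) \<Longrightarrow> z \<le> l \<Longrightarrow> y \<le> z \<Longrightarrow> (ee y \<in> C t \<longleftrightarrow> ee z \<in> C t)"
proof (induction z)
  case 0 then show ?case by simp
next
  case (Suc z)
  show ?case
  proof (cases "y = Suc z")
    case False
    then have yz: "y \<le> z" using Suc by simp
    have IH: "ee y \<in> C t \<longleftrightarrow> ee z \<in> C t" using Suc yz by simp
    have nm: "\<not> mixed t (V (Suc z))" using Suc.prems yz by simp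
    have "ee z \<in> C t \<longleftrightarrow> ee (Suc z) \<in> C t"
      using nm_eq[OF nm ee_E ee_E, of z "Suc z"] Suc.prems unfolding ee_def by simp
    then show ?thesis using IH by simp
  qed simp
qed

lemma vmeet: "y < l \<Longrightarrow> \<exists>t. meet t (V (Suc y))"
  apply (rule meet3[of "ee y" "ee (Suc y)" "{V (Suc y), PA (Suc y)}"])
  using ee_E[of y] ee_E[of "Suc y"] tri_edge[OF tri_VPA[of "Suc y" l]]
  by (auto simp: ee_def doubleton_eq_iff)

lemma route:
  assumes ij: "i \<in> {1,2}" "j \<in> {1,2}" and ab: "a < 3" "b < 3"
    and g1: "g1 \<in> C t" "Ch i a \<in> g1" and g2: "g2 \<in> E" "g2 \<notin> C t" "Ch j b \<in> g2"
  shows "mixed t (Ch i a) \<or> mixed t (Q i) \<or> mixed t (pp i) \<or> mixed t (V 0) \<or> mixed t (pp j)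
     \<or> mixed t (Q j) \<or> mixed t (Ch j b)"
proof (rule ccontr)
  assume "\<not> ?thesis"
  then have nm: "\<not> mixed t (Ch i a)" "\<not> mixed t (Q i)" "\<not> mixed t (pp i)" "\<not> mixed t (V 0)"
     "\<not> mixed t (pp j)" "\<not> mixed t (Q j)" "\<not> mixed t (Ch j b)" by auto
  have "{Q i, Ch i a} \<in> C t" by (rule nmC[OF nm(1) g1(1) eQ_E[OF ij(1) ab(1)] g1(2)]) simp
  then have "{Q i, pp i} \<in> C t" by (rule nmC[OF nm(2) _ edge_Qpp[OF ij(1)]]) simp_all
  then have "{V 0, pp i} \<in> C t" by (rule nmC[OF nm(3) _ edge_Vpp[OF ij(1)]]) simp_all
  then have "{V 0, pp j} \<in> C t" by (rule nmC[OF nm(4) _ edge_Vpp[OF ij(2)]]) simp_all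
  then have "{Q j, pp j} \<in> C t" by (rule nmC[OF nm(5) _ edge_Qpp[OF ij(2)]]) simp_all
  then have "{Q j, Ch j b} \<in> C t" by (rule nmC[OF nm(6) _ eQ_E[OF ij(2) ab(2)]]) simp_all
  then have "g2 \<in> C t" by (rule nmC[OF nm(7) _ g2(1)]) (simp_all add: g2)
  then show False using g2 by simp
qed

lemma meet_third0:
  assumes m: "meet t v"
  shows "\<exists>j3<3. (\<forall>w. w \<noteq> v \<longrightarrow> P t j3 \<noteq> Some w \<longrightarrow> \<not> mixed t w)"
proof -
  obtain j1 j2 where j: "j1 \<noteq> j2" "P t j1 = Some v" "P t j2 = Some v" and tn: "t \<le> n"
    using m unfolding meet_def by blast
  have jl: "j1 < 3" "j2 < 3" using P_lt tn j by auto
  define j3 where "j3 = 3 - j1 - j2"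
  have j3: "j3 < 3" using jl j(1) unfolding j3_def by arith
  have all: "\<forall>k<3. k = j1 \<or> k = j2 \<or> k = j3"
  proof (intro allI impI)
    fix k :: nat assume "k < 3" then show "k = j1 \<or> k = j2 \<or> k = j3"
      using jl j(1) unfolding j3_def by arith
  qed
  have "\<forall>w. w \<noteq> v \<longrightarrow> P t j3 \<noteq> Some w \<longrightarrow> \<not> mixed t w"
  proof (intro allI impI)
    fix w assume "w \<noteq> v" "P t j3 \<noteq> Some w"
    then have "\<forall>k<3. P t k \<noteq> Some w" using all j by auto
    then show "\<not> mixed t w" using unocc tn by blast
  qed
  then show ?thesis using j3 by blast
qed

end



context strat begin

lemma stage_out:
  assumes h: "\<forall>w. w \<noteq> V x \<longrightarrow> P t j3 \<noteq> Some w \<longrightarrow> \<not> mixed t w" and x: "1 \<le> x"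
    and e0: "ee 0 \<in> C t" and j: "j \<in> {1,2}" "b < 3" and g2: "g2 \<in> E" "g2 \<notin> C t" "Ch j b \<in> g2"
  shows "(P t j3 \<noteq> Some (V 0) \<longrightarrow> {V 0, pp j} \<in> C t)
    \<and> (P t j3 \<noteq> Some (pp j) \<longrightarrow> {V 0, pp j} \<in> C t \<longrightarrow> {Q j, pp j} \<in> C t)
    \<and> (P t j3 \<noteq> Some (Q j) \<longrightarrow> {Q j, pp j} \<in> C t \<longrightarrow> {Q j, Ch j b} \<in> C t)
    \<and> (P t j3 \<noteq> Some (Ch j b) \<longrightarrow> {Q j, Ch j b} \<in> C t \<longrightarrow> False)"
proof (intro conjI impI)
  assume "P t j3 \<noteq> Some (V 0)"
  then have nm: "\<not> mixed t (V 0)" using h x by auto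
  show "{V 0, pp j} \<in> C t" by (rule nmC[OF nm e0 edge_Vpp[OF j(1)]]) (simp_all add: ee_def)
next
  assume "P t j3 \<noteq> Some (pp j)" "{V 0, pp j} \<in> C t"
  moreover have nm: "\<not> mixed t (pp j)" using h calculation by auto
  ultimately show "{Q j, pp j} \<in> C t" using nmC[OF nm _ edge_Qpp[OF j(1)]] by simp
next
  assume "P t j3 \<noteq> Some (Q j)" "{Q j, pp j} \<in> C t"
  moreover have nm: "\<not> mixed t (Q j)" using h calculation by auto
  ultimately show "{Q j, Ch j b} \<in> C t" using nmC[OF nm _ eQ_E[OF j]] by simp
next
  assume "P t j3 \<noteq> Some (Ch j b)" "{Q j, Ch j b} \<in> C t"
  moreover have nm: "\<not> mixed t (Ch j b)" using h calculation by auto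
  ultimately have "g2 \<in> C t" using nmC[OF nm _ g2(1)] g2(3) by simp
  then show False using g2 by simp
qed

lemma stage_in:
  assumes h: "\<forall>w. w \<noteq> V x \<longrightarrow> P t j3 \<noteq> Some w \<longrightarrow> \<not> mixed t w" and x: "1 \<le> x"
    and e0: "ee 0 \<notin> C t" and i: "i \<in> {1,2}" "a < 3" and g1: "g1 \<in> C t" "Ch i a \<in> g1"
    and L: "x \<le> l"
  shows "(P t j3 \<noteq> Some (V 0) \<longrightarrow> {V 0, pp i} \<notin> C t)
    \<and> (P t j3 \<noteq> Some (pp i) \<longrightarrow> {V 0, pp i} \<notin> C t \<longrightarrow> {Q i, pp i} \<notin> C t)
    \<and> (P t j3 \<noteq> Some (Q i) \<longrightarrow> {Q i, pp i} \<notin> C t \<longrightarrow> {Q i, Ch i a} \<notin> C t)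
    \<and> (P t j3 \<noteq> Some (Ch i a) \<longrightarrow> {Q i, Ch i a} \<notin> C t \<longrightarrow> False)"
proof (intro conjI impI)
  assume "P t j3 \<noteq> Some (V 0)"
  then have nm: "\<not> mixed t (V 0)" using h x by auto
  show "{V 0, pp i} \<notin> C t" by (rule nmN[OF nm ee_E e0]) (use L in \<open>simp_all add: ee_def\<close>)
next
  assume "P t j3 \<noteq> Some (pp i)" "{V 0, pp i} \<notin> C t"
  moreover have nm: "\<not> mixed t (pp i)" using h calculation by auto
  ultimately show "{Q i, pp i} \<notin> C t" using nmN[OF nm edge_Vpp[OF i(1)]] by simp
next
  assume "P t j3 \<noteq> Some (Q i)" "{Q i, pp i} \<notin> C t"
  moreover have nm: "\<not> mixed t (Q i)" using h calculation by auto
  ultimately show "{Q i, Ch i a} \<notin> C t" using nmN[OF nm edge_Qpp[OF i(1)]] by simp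
next
  assume "P t j3 \<noteq> Some (Ch i a)" "{Q i, Ch i a} \<notin> C t"
  moreover have nm: "\<not> mixed t (Ch i a)" using h calculation by auto
  ultimately have "g1 \<notin> C t" using nmN[OF nm eQ_E[OF i]] g1(2) by simp
  then show False using g1 by simp
qed

end



context strat begin

lemma main:
  assumes l7: "7 \<le> l" and ij: "i \<in> {1,2}" "j \<in> {1,2}" "i \<noteq> j" and ab: "a < 3" "b < 3"
    and mi: "ti \<le> n" "mixed ti (Ch i a)" "\<forall>w. w \<noteq> Ch i a \<longrightarrow> w \<noteq> Q i \<longrightarrow> \<not> mixed ti w"
    and mj: "tj \<le> n" "mixed tj (Ch j b)" "\<forall>w. w \<noteq> Ch j b \<longrightarrow> w \<noteq> Q j \<longrightarrow> \<not> mixed tj w"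
    and lt: "ti < tj"
  shows False
proof -
  obtain g1 where g1: "g1 \<in> C ti" "Ch i a \<in> g1" using mi(2) unfolding mixed_def by blast
  obtain g2 where g2: "g2 \<in> E" "g2 \<notin> C tj" "Ch j b \<in> g2" using mj(2) unfolding mixed_def by blast
  have g2i: "g2 \<notin> C ti" using g2 C_mono[of ti tj] lt mj(1) by auto
  have g1j: "g1 \<in> C tj" using g1 C_mono[of ti tj] lt mj(1) by auto
  have pij: "pp i \<noteq> pp j" "pp j \<noteq> pp i" using pp_inj ij by metis+
  (* A: at ti the path is contaminated *)
  have A1: "\<not> mixed ti (Ch j b)" "\<not> mixed ti (Q j)" "\<not> mixed ti (pp j)" "\<not> mixed ti (V 0)"
    "\<And>x. \<not> mixed ti (V x)" using mi(3) ij by auto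
  have "{Q j, Ch j b} \<notin> C ti" by (rule nmN[OF A1(1) g2(1) g2i g2(3)]) simp
  then have "{Q j, pp j} \<notin> C ti" using nmN[OF A1(2) eQ_E[OF ij(2) ab(2)]] by simp
  then have "{V 0, pp j} \<notin> C ti" using nmN[OF A1(3) edge_Qpp[OF ij(2)]] by simp
  then have e0A: "ee 0 \<notin> C ti" using nmN[OF A1(4) edge_Vpp[OF ij(2)]] by (simp add: ee_def)
  have pathA: "ee x \<notin> C ti" if "x \<le> l" for x
    using chain[of 0 x ti] A1(5) that e0A by auto
  have vA: "e \<notin> C ti" if "y < l" "V (Suc y) \<in> e" for y e
    using nmN[of ti "V (Suc y)" "ee (Suc y)" e] A1(5) ee_E[of "Suc y"] pathA[of "Suc y"] that
    by (simp add: ee_def)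
  (* B: at tj the path is clean *)
  have B1: "\<not> mixed tj (Ch i a)" "\<not> mixed tj (Q i)" "\<not> mixed tj (pp i)" "\<not> mixed tj (V 0)"
    "\<And>x. \<not> mixed tj (V x)" using mj(3) ij by auto
  have "{Q i, Ch i a} \<in> C tj" by (rule nmC[OF B1(1) g1j eQ_E[OF ij(1) ab(1)] g1(2)]) simp
  then have "{Q i, pp i} \<in> C tj" using nmC[OF B1(2) _ edge_Qpp[OF ij(1)]] by simp
  then have "{V 0, pp i} \<in> C tj" using nmC[OF B1(3) _ edge_Vpp[OF ij(1)]] by simp
  then have e0B: "ee 0 \<in> C tj" using nmC[OF B1(4) _ ee_E, of _ 0] by (simp add: ee_def)
  have pathB: "ee x \<in> C tj" if "x \<le> l" for x
    using chain[of 0 x tj] B1(5) that e0B by auto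
  have vB: "e \<in> C tj" if "y < l" "V (Suc y) \<in> e" "e \<in> E" for y e
    using nmC[of tj "V (Suc y)" "ee (Suc y)" e] B1(5) pathB[of "Suc y"] that
    by (simp add: ee_def)
  define \<tau> where "\<tau> x = (SOME t. meet t (V x))" for x
  have mt: "meet (\<tau> x) (V x)" if "1 \<le> x" "x \<le> 7" for x
  proof -
    have "\<exists>t. meet t (V (Suc (x - 1)))" using vmeet[of "x - 1"] that l7 by simp
    then have "\<exists>t. meet t (V x)" using that by simp
    then show ?thesis unfolding \<tau>_def by (rule someI_ex)
  qed
  have tn: "\<tau> x \<le> n" "mixed (\<tau> x) (V x)" if "1 \<le> x" "x \<le> 7" for x
    using mt[OF that] unfolding meet_def by auto
  have bnd: "ti < \<tau> x \<and> \<tau> x < tj" if xx: "1 \<le> x" "x \<le> 7" for x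
  proof
    obtain e f where e: "e \<in> C (\<tau> x)" "V x \<in> e" and f: "f \<in> E" "f \<notin> C (\<tau> x)" "V x \<in> f"
      using tn(2)[OF xx] unfolding mixed_def by blast
    have xs: "x = Suc (x - 1)" "x - 1 < l" using xx l7 by auto
    show "ti < \<tau> x"
    proof (rule ccontr)
      assume "\<not> ti < \<tau> x"
      then have "e \<in> C ti" using e C_mono[of "\<tau> x" ti] mi(1) by auto
      then show False using vA[of "x - 1" e] xs e by auto
    qed
    show "\<tau> x < tj"
    proof (rule ccontr)
      assume "\<not> \<tau> x < tj"
      then have "f \<notin> C tj" using f C_mono[of tj "\<tau> x"] tn[OF xx] by auto
      then show False using vB[of "x - 1" f] xs f by auto
    qed
  qed
  have g1t: "g1 \<in> C (\<tau> x)" and g2t: "g2 \<notin> C (\<tau> x)" if "1 \<le> x" "x \<le> 7" for x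
    using g1 g2 C_mono[of ti "\<tau> x"] C_mono[of "\<tau> x" tj] bnd[OF that] tn[OF that] mj(1) by auto
  have third_route: "\<exists>w. P (\<tau> x) j3 = Some w \<and> w \<in> {Ch i a, Q i, pp i, V 0, pp j, Q j, Ch j b}"
    if x: "1 \<le> x" "x \<le> 7" and h: "\<forall>w. w \<noteq> V x \<longrightarrow> P (\<tau> x) j3 \<noteq> Some w \<longrightarrow> \<not> mixed (\<tau> x) w" for x j3
  proof (rule ccontr)
    assume nt: "\<not> ?thesis"
    have "\<not> mixed (\<tau> x) w" if wr: "w \<in> {Ch i a, Q i, pp i, V 0, pp j, Q j, Ch j b}" for w
    proof -
      have "w \<noteq> V x" using wr x by auto
      moreover have "P (\<tau> x) j3 \<noteq> Some w" using nt wr by blast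
      ultimately show ?thesis using h by blast
    qed
    then show False using route[OF ij(1,2) ab g1t[OF x] g1(2) g2(1) g2t[OF x] g2(3)] by auto
  qed
  have NM: "\<not> mixed (\<tau> x) (V y)" if hh: "1 \<le> x" "x \<le> 7" "1 \<le> y" "y \<noteq> x" for x y
  proof -
    obtain j3 where h: "\<forall>w. w \<noteq> V x \<longrightarrow> P (\<tau> x) j3 \<noteq> Some w \<longrightarrow> \<not> mixed (\<tau> x) w"
      using meet_third0[OF mt[OF hh(1,2)]] by blast
    obtain w where "P (\<tau> x) j3 = Some w" "w \<in> {Ch i a, Q i, pp i, V 0, pp j, Q j, Ch j b}"
      using third_route[OF hh(1,2) h] by blast
    then have "P (\<tau> x) j3 \<noteq> Some (V y)" using hh by auto
    then show ?thesis using h hh by auto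
  qed
  have inj: "\<tau> x \<noteq> \<tau> y" if "1 \<le> x" "x \<le> 7" "1 \<le> y" "y \<le> 7" "x \<noteq> y" for x y
    using NM[of x y] tn(2)[of y] that by auto
  have AONL: "\<tau> y < \<tau> x \<longleftrightarrow> ee (x - 1) \<in> C (\<tau> x)" if hh: "1 \<le> y" "y < x" "x \<le> 7" for x y
  proof -
    have x1: "1 \<le> x" using hh by simp
    have ch: "ee y \<in> C (\<tau> x) \<longleftrightarrow> ee (x - 1) \<in> C (\<tau> x)"
      by (rule chain) (use NM[OF x1 hh(3)] hh l7 in auto)
    have nmy: "\<not> mixed (\<tau> x) (V y)" using NM[OF x1 hh(3) hh(1)] hh by simp
    have eyE: "ee y \<in> E" using ee_E hh l7 by simp
    have vy: "V y \<in> ee y" by (simp add: ee_def)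
    show ?thesis
    proof (cases "\<tau> y < \<tau> x")
      case True
      obtain e where e: "e \<in> C (\<tau> y)" "V y \<in> e" using tn(2)[of y] hh unfolding mixed_def by auto
      then have "e \<in> C (\<tau> x)" using C_mono[of "\<tau> y" "\<tau> x"] True tn(1)[OF x1 hh(3)] by auto
      then have "ee y \<in> C (\<tau> x)" using nmC[OF nmy _ eyE e(2) vy] by simp
      then show ?thesis using ch True by simp
    next
      case False
      then have lt: "\<tau> x < \<tau> y" using inj[of x y] hh by fastforce
      obtain f where f: "f \<in> E" "f \<notin> C (\<tau> y)" "V y \<in> f" using tn(2)[of y] hh unfolding mixed_def by auto
      then have "f \<notin> C (\<tau> x)" using C_mono[of "\<tau> x" "\<tau> y"] lt tn(1)[of y] hh by auto
      then have "ee y \<notin> C (\<tau> x)" using nmN[OF nmy f(1) _ f(3) vy] by simp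
      then show ?thesis using ch False by simp
    qed
  qed
  have AONR: "\<tau> y < \<tau> x \<longleftrightarrow> ee x \<in> C (\<tau> x)" if hh: "1 \<le> x" "x < y" "y \<le> 7" for x y
  proof -
    have x7: "x \<le> 7" and y1: "1 \<le> y" using hh by auto
    have ch: "ee x \<in> C (\<tau> x) \<longleftrightarrow> ee (y - 1) \<in> C (\<tau> x)"
      by (rule chain) (use NM[OF hh(1) x7] hh l7 in auto)
    have nmy: "\<not> mixed (\<tau> x) (V y)" using NM[OF hh(1) x7 y1] hh by simp
    have eyE: "ee (y - 1) \<in> E" using ee_E hh l7 by simp
    have vy: "V y \<in> ee (y - 1)" using y1 by (simp add: ee_def)
    show ?thesis
    proof (cases "\<tau> y < \<tau> x")
      case True
      obtain e where e: "e \<in> C (\<tau> y)" "V y \<in> e" using tn(2)[of y] hh unfolding mixed_def by auto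
      then have "e \<in> C (\<tau> x)" using C_mono[of "\<tau> y" "\<tau> x"] True tn(1)[OF hh(1) x7] by auto
      then have "ee (y - 1) \<in> C (\<tau> x)" using nmC[OF nmy _ eyE e(2) vy] by simp
      then show ?thesis using ch True by simp
    next
      case False
      then have lt: "\<tau> x < \<tau> y" using inj[of x y] hh by fastforce
      obtain f where f: "f \<in> E" "f \<notin> C (\<tau> y)" "V y \<in> f" using tn(2)[of y] hh unfolding mixed_def by auto
      then have "f \<notin> C (\<tau> x)" using C_mono[of "\<tau> x" "\<tau> y"] lt tn(1)[of y] hh by auto
      then have "ee (y - 1) \<notin> C (\<tau> x)" using nmN[OF nmy f(1) _ f(3) vy] by simp
      then show ?thesis using ch False by simp
    qed
  qed
  have E0: "ee 0 \<in> C (\<tau> x) \<longleftrightarrow> ee (x - 1) \<in> C (\<tau> x)" if "1 \<le> x" "x \<le> 7" for x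
    by (rule chain) (use NM[OF that] that l7 in auto)
  have m4: "meet (\<tau> 4) (V 4)" and m5: "meet (\<tau> 5) (V 5)" and m6: "meet (\<tau> 6) (V 6)"
    and m7: "meet (\<tau> 7) (V 7)" by (rule mt; simp)+
  have vc4: "\<And>c'. c' \<in> vcolors E (T_col l) (V 4) \<Longrightarrow> c' \<in> {1,2}" by (rule vc_V4)
  have vc5: "\<And>c'. c' \<in> vcolors E (T_col l) (V 5) \<Longrightarrow> c' \<in> {2,3}" by (rule vc_V5)
  have vc6: "\<And>c'. c' \<in> vcolors E (T_col l) (V 6) \<Longrightarrow> c' \<in> {1,3}" by (rule vc_V6)
  have vc7: "\<And>c'. c' \<in> vcolors E (T_col l) (V 7) \<Longrightarrow> c' \<in> {1,2}" by (rule vc_V7)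
  obtain k4 where k4: "ct k4 = 3" "\<forall>w. w \<noteq> V 4 \<longrightarrow> P (\<tau> 4) k4 \<noteq> Some w \<longrightarrow> \<not> mixed (\<tau> 4) w"
    using meet_third[OF m4 vc4, where c=3] by auto
  obtain k5 where k5: "ct k5 = 1" "\<forall>w. w \<noteq> V 5 \<longrightarrow> P (\<tau> 5) k5 \<noteq> Some w \<longrightarrow> \<not> mixed (\<tau> 5) w"
    using meet_third[OF m5 vc5, where c=1] by auto
  obtain k6 where k6: "ct k6 = 2" "\<forall>w. w \<noteq> V 6 \<longrightarrow> P (\<tau> 6) k6 \<noteq> Some w \<longrightarrow> \<not> mixed (\<tau> 6) w"
    using meet_third[OF m6 vc6, where c=2] by auto
  obtain k7 where k7: "ct k7 = 3" "\<forall>w. w \<noteq> V 7 \<longrightarrow> P (\<tau> 7) k7 \<noteq> Some w \<longrightarrow> \<not> mixed (\<tau> 7) w"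
    using meet_third[OF m7 vc7, where c=3] by auto
  have nocol: "P t k \<noteq> Some w" if "t \<le> n" "ct k \<notin> vcolors E (T_col l) w" for t k w
    using P_col that by blast
  have n3V0: "3 \<notin> vcolors E (T_col l) (V 0)" using vc_V0[of 3 l] by auto
  have n3Ch: "3 \<notin> vcolors E (T_col l) (Ch k c)" for k c using vc_Ch[of 3 l k c] by auto
  have n1pp: "1 \<notin> vcolors E (T_col l) (pp k)" for k using vc_pp[of 1 l k] by auto
  have n2Q: "2 \<notin> vcolors E (T_col l) (Q k)" for k using vc_Q[of 2 l k] by auto
  have t4: "\<tau> 4 \<le> n" and t5: "\<tau> 5 \<le> n" and t6: "\<tau> 6 \<le> n" and t7: "\<tau> 7 \<le> n"
    using tn(1) by simp_all
  have i17: "\<tau> 1 \<noteq> \<tau> 7" using inj[of 1 7] by simp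
  consider (out) "\<tau> 1 < \<tau> 7" | (inw) "\<tau> 7 < \<tau> 1" using i17 by arith
  then show False
  proof cases
    case out
    have R1: "ee 1 \<notin> C (\<tau> 1)" using AONR[of 1 7] out by simp
    have after1: "\<tau> 1 < \<tau> x" if "2 \<le> x" "x \<le> 7" for x
      using AONR[of 1 x] R1 inj[of 1 x] that by auto
    have Lx: "ee (x - 1) \<in> C (\<tau> x)" if "2 \<le> x" "x \<le> 7" for x
      using AONL[of 1 x] after1[OF that] that by simp
    have e0: "ee 0 \<in> C (\<tau> x)" if "2 \<le> x" "x \<le> 7" for x
      using E0[of x] Lx[OF that] that by simp
    have o45: "\<tau> 4 < \<tau> 5" using AONL[of 4 5] Lx[of 5] by simp
    have o56: "\<tau> 5 < \<tau> 6" using AONL[of 5 6] Lx[of 6] by simp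
    have o67: "\<tau> 6 < \<tau> 7" using AONL[of 6 7] Lx[of 7] by simp
    have "P (\<tau> 4) k4 \<noteq> Some (V 0)" using nocol[OF t4] k4(1) n3V0 by simp
    then have d4: "{V 0, pp j} \<in> C (\<tau> 4)" using stage_out[OF k4(2) _ e0[of 4] ij(2) ab(2) g2(1) g2t[of 4] g2(3)] by simp
    then have "{V 0, pp j} \<in> C (\<tau> 5)" using C_mono[of "\<tau> 4" "\<tau> 5"] o45 t5 by auto
    moreover have "P (\<tau> 5) k5 \<noteq> Some (pp j)" using nocol[OF t5] k5(1) n1pp by simp
    ultimately have d5: "{Q j, pp j} \<in> C (\<tau> 5)"
      using stage_out[OF k5(2) _ e0[of 5] ij(2) ab(2) g2(1) g2t[of 5] g2(3)] by simp
    then have "{Q j, pp j} \<in> C (\<tau> 6)" using C_mono[of "\<tau> 5" "\<tau> 6"] o56 t6 by auto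
    moreover have "P (\<tau> 6) k6 \<noteq> Some (Q j)" using nocol[OF t6] k6(1) n2Q by simp
    ultimately have d6: "{Q j, Ch j b} \<in> C (\<tau> 6)"
      using stage_out[OF k6(2) _ e0[of 6] ij(2) ab(2) g2(1) g2t[of 6] g2(3)] by simp
    then have "{Q j, Ch j b} \<in> C (\<tau> 7)" using C_mono[of "\<tau> 6" "\<tau> 7"] o67 t7 by auto
    moreover have "P (\<tau> 7) k7 \<noteq> Some (Ch j b)" using nocol[OF t7] k7(1) n3Ch by simp
    ultimately show False
      using stage_out[OF k7(2) _ e0[of 7] ij(2) ab(2) g2(1) g2t[of 7] g2(3)] by simp
  next
    case inw
    have L7: "ee 6 \<notin> C (\<tau> 7)" using AONL[of 1 7] inw by simp
    have before7: "\<tau> 7 < \<tau> y" if "1 \<le> y" "y \<le> 6" for y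
      using AONL[of y 7] L7 inj[of y 7] that by auto
    have Ry: "ee y \<in> C (\<tau> y)" if "1 \<le> y" "y \<le> 6" for y
      using AONR[of y 7] before7[OF that] that by simp
    have o54: "\<tau> 5 < \<tau> 4" using AONR[of 4 5] Ry[of 4] by simp
    have o65: "\<tau> 6 < \<tau> 5" using AONR[of 5 6] Ry[of 5] by simp
    have o76: "\<tau> 7 < \<tau> 6" using AONR[of 6 7] Ry[of 6] by simp
    have bef1: "\<tau> x < \<tau> 1" if "2 \<le> x" "x \<le> 7" for x
      using AONR[of 1 x] Ry[of 1] that by simp
    have e0: "ee 0 \<notin> C (\<tau> x)" if "2 \<le> x" "x \<le> 7" for x
      using AONL[of 1 x] bef1[OF that] E0[of x] that by simp
    have L: "(4::nat) \<le> l" "(5::nat) \<le> l" "(6::nat) \<le> l" "(7::nat) \<le> l" using l7 by auto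
    have "P (\<tau> 7) k7 \<noteq> Some (Ch i a)" using nocol[OF t7] k7(1) n3Ch by simp
    then have "{Q i, Ch i a} \<in> C (\<tau> 7)"
      using stage_in[OF k7(2) _ e0[of 7] ij(1) ab(1) g1t[of 7] g1(2) L(4)] by auto
    then have "{Q i, Ch i a} \<in> C (\<tau> 6)" using C_mono[of "\<tau> 7" "\<tau> 6"] o76 t6 by auto
    moreover have "P (\<tau> 6) k6 \<noteq> Some (Q i)" using nocol[OF t6] k6(1) n2Q by simp
    ultimately have "{Q i, pp i} \<in> C (\<tau> 6)"
      using stage_in[OF k6(2) _ e0[of 6] ij(1) ab(1) g1t[of 6] g1(2) L(3)] by auto
    then have "{Q i, pp i} \<in> C (\<tau> 5)" using C_mono[of "\<tau> 6" "\<tau> 5"] o65 t5 by auto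
    moreover have "P (\<tau> 5) k5 \<noteq> Some (pp i)" using nocol[OF t5] k5(1) n1pp by simp
    ultimately have "{V 0, pp i} \<in> C (\<tau> 5)"
      using stage_in[OF k5(2) _ e0[of 5] ij(1) ab(1) g1t[of 5] g1(2) L(2)] by auto
    then have "{V 0, pp i} \<in> C (\<tau> 4)" using C_mono[of "\<tau> 5" "\<tau> 4"] o54 t4 by auto
    moreover have "P (\<tau> 4) k4 \<noteq> Some (V 0)" using nocol[OF t4] k4(1) n3V0 by simp
    ultimately show False
      using stage_in[OF k4(2) _ e0[of 4] ij(1) ab(1) g1t[of 4] g1(2) L(1)] by auto
  qed
qed

end

theorem lemma3p5:
  fixes l :: nat
  assumes "l \<ge> 7"
  shows "\<not> (\<exists>(ct :: nat \<Rightarrow> nat) n (ms :: nat \<Rightarrow> vert move) ss.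
              monotone_search_strategy (T_edges l) (T_col l) ct 3 n ms ss)"
proof
  assume "\<exists>(ct :: nat \<Rightarrow> nat) n (ms :: nat \<Rightarrow> vert move) ss.
              monotone_search_strategy (T_edges l) (T_col l) ct 3 n ms ss"
  then obtain ct n ms ss where h: "monotone_search_strategy (T_edges l) (T_col l) ct 3 n ms ss"
    by blast
  interpret strat l ct n ms ss using h by unfold_locales
  obtain a1 t1 where s1: "a1 < 3" "t1 \<le> n" "mixed t1 (Ch 1 a1)"
    "\<forall>w. w \<noteq> Ch 1 a1 \<longrightarrow> w \<noteq> Q 1 \<longrightarrow> \<not> mixed t1 w"
    using side[of 1] by auto
  obtain a2 t2 where s2: "a2 < 3" "t2 \<le> n" "mixed t2 (Ch 2 a2)"
    "\<forall>w. w \<noteq> Ch 2 a2 \<longrightarrow> w \<noteq> Q 2 \<longrightarrow> \<not> mixed t2 w"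
    using side[of 2] by auto
  have "t1 \<noteq> t2" using s1(4) s2(3) by auto
  then consider "t1 < t2" | "t2 < t1" by arith
  then show False
  proof cases
    case 1
    show False by (rule main[of 1 2 a1 a2 t1 t2]) (use assms s1 s2 1 in auto)
  next
    case 2
    show False by (rule main[of 2 1 a2 a1 t2 t1]) (use assms s1 s2 2 in auto)
  qed
qed

end
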